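(* Let $q:\mathbb{R}^2\to\mathbb{C}^N$ be smooth, let $\Phi_1$ be a solution of the Lax pair at $\lambda=\lambda_1$, and let $\Phi$ be a solution at $\lambda$, with $\lambda\neq\overline{\lambda_1}$. Define $\Omega(\Phi_1,\Phi)=\dfrac{\Phi_1^{\dagger}\Lambda\Phi}{\mathrm{i}(\lambda-\overline{\lambda_1})}$ and $\Omega(\Phi_1,\Phi_1)$ as follows: if $\lambda_1\notin\mathbb{R}$, $\Omega(\Phi_1,\Phi_1)=\dfrac{\Phi_1^{\dagger}\Lambda\Phi_1}{\mathrm{i}(\lambda_1-\overline{\lambda_1})}$; if $\lambda_1\in\mathbb{R}$, assume $\Phi_1^{\dagger}\Lambda\Phi_1\equiv0$ and let $\Omega(\Phi_1,\Phi_1)$ be any real-valued smooth function with $d\,\Omega(\Phi_1,\Phi_1)=\omega(\Phi_1,\Phi_1)$. Assume $\Omega(\Phi_1,\Phi_1)$ vanishes nowhere. Set $$\Phi[1]=\Phi-\frac{\Phi_1\,\Omega(\Phi_1,\Phi)}{\Omega(\Phi_1,\Phi_1)},\qquad Q[1]=Q-\mathrm{i}\Big[\sigma_3,\frac{\Phi_1\Phi_1^{\dagger}\Lambda}{\Omega(\Phi_1,\Phi_1)}\Big].$$ Then $Q[1]$ has the form $\begin{pmatrix}0&-\mathbf q[1]^{\dagger}S\\ \mathbf q[1]&0\end{pmatrix}$ for some $\mathbf q[1]:\mathbb{R}^2\to\mathbb{C}^N$, and $\Phi[1]_x=(\mathrm{i}\lambda\sigma_3+\mathrm{i}Q[1])\Phi[1]$,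 $\Phi[1]_t=\big(\mathrm{i}\lambda^2\sigma_3+\mathrm{i}\lambda Q[1]-\tfrac12(\mathrm{i}\sigma_3Q[1]^2-\sigma_3Q[1]_x)\big)\Phi[1]$.
   Context: Fix integers $N\ge1$ and $0\le k\le N$, and let $S=\mathrm{diag}(s_1,\dots,s_N)$ with $s_l=1$ for $l\le k$ and $s_l=-1$ for $l>k$. The $N$-component NLS equation is $\mathrm{i}\mathbf q_t+\tfrac12\mathbf q_{xx}-\mathbf q\,(\mathbf q^{\dagger}S\mathbf q)=0$ for $\mathbf q=(q_1,\dots,q_N)^T:\mathbb{R}^2\to\mathbb{C}^N$ (here ${}^\dagger$ is conjugate transpose). Its Lax pair is $\Phi_x=(\mathrm{i}\lambda\sigma_3+\mathrm{i}Q)\Phi$, $\Phi_t=\big(\mathrm{i}\lambda^2\sigma_3+\mathrm{i}\lambda Q-\tfrac12(\mathrm{i}\sigma_3Q^2-\sigma_3Q_x)\big)\Phi$, for $\Phi:\mathbb{R}^2\to\mathbb{C}^{N+1}$ and spectral parameter $\lambda\in\mathbb{C}$, where $Q=\begin{pmatrix}0&-\mathbf q^{\dagger}S\\ \mathbf q&0_{N\times N}\end{pmatrix}$ and $\sigma_3=\mathrm{diag}(1,-I_N)$. A "solution at $\lambda$" is a smooth $\Phi$ satisfying both equations with that value of $\lambda$. Let $\Lambda=\mathrm{diag}(1,-s_1,\dots,-s_N)$ (i.e. $1$, then $-1$ repeated $k$ times, then $1$ repeated $N-k$ times). For a solution $\Phi_1$ at $\lambda_1$ and a solution $\Phi$ at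 $\lambda$, $\omega(\Phi_1,\Phi)$ denotes the $1$-form $\Phi_1^{\dagger}\Lambda\sigma_3\Phi\,dx+[(\lambda+\overline{\lambda_1})\Phi_1^{\dagger}\Lambda\sigma_3\Phi+\Phi_1^{\dagger}\Lambda Q\Phi]\,dt$. $[A,B]=AB-BA$. *)

theory Defs
  imports "HOL-Analysis.Analysis"
begin

text \<open>Vectors in C^(N+1) are
functions nat => complex, only indices 0..N are meaningful; index 0 is the first
component, indices 1..N correspond to q_1..q_N. Vectors q in C^N are functions
nat => complex with meaningful indices 1..N. (N+1)x(N+1) matrices are functions
nat => nat => complex with meaningful indices 0..N.\<close>

type_synonym cvec = "nat \<Rightarrow> complex"
type_synonym cmat = "nat \<Rightarrow> nat \<Rightarrow> complex"

definition has_px :: "(real \<times> real \<Rightarrow> complex) \<Rightarrow> (real \<times> real \<Rightarrow> complex) \<Rightarrow> bool" where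
  "has_px f g \<longleftrightarrow> (\<forall>x t. ((\<lambda>s. f (s, t)) has_vector_derivative g (x, t)) (at x))"

definition has_pt :: "(real \<times> real \<Rightarrow> complex) \<Rightarrow> (real \<times> real \<Rightarrow> complex) \<Rightarrow> bool" where
  "has_pt f g \<longleftrightarrow> (\<forall>x t. ((\<lambda>s. f (x, s)) has_vector_derivative g (x, t)) (at t))"

text \<open>C-infinity: f is continuous, and both partial derivatives exist everywhere
and are again C-infinity.\<close>
coinductive smooth2 :: "(real \<times> real \<Rightarrow> complex) \<Rightarrow> bool" where
  "continuous_on UNIV f \<Longrightarrow> has_px f g \<Longrightarrow> has_pt f h \<Longrightarrow> smooth2 g \<Longrightarrow> smooth2 h
   \<Longrightarrow> smooth2 f"

definition sgnS :: "nat \<Rightarrow> nat \<Rightarrow> complex" where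
  "sgnS k l = (if l \<le> k then 1 else -1)"

definition mmul :: "nat \<Rightarrow> cmat \<Rightarrow> cmat \<Rightarrow> cmat" where
  "mmul N A B = (\<lambda>i j. \<Sum>l\<le>N. A i l * B l j)"

definition mvec :: "nat \<Rightarrow> cmat \<Rightarrow> cvec \<Rightarrow> cvec" where
  "mvec N A v = (\<lambda>i. \<Sum>j\<le>N. A i j * v j)"

definition hform :: "nat \<Rightarrow> cvec \<Rightarrow> cmat \<Rightarrow> cvec \<Rightarrow> complex" where
  "hform N u M v = (\<Sum>i\<le>N. \<Sum>j\<le>N. cnj (u i) * M i j * v j)"

definition outer :: "cvec \<Rightarrow> cvec \<Rightarrow> cmat" where
  "outer u v = (\<lambda>i j. u i * cnj (v j))"

definition msub :: "cmat \<Rightarrow> cmat \<Rightarrow> cmat" where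
  "msub A B = (\<lambda>i j. A i j - B i j)"

definition mscale :: "complex \<Rightarrow> cmat \<Rightarrow> cmat" where
  "mscale c A = (\<lambda>i j. c * A i j)"

definition comm :: "nat \<Rightarrow> cmat \<Rightarrow> cmat \<Rightarrow> cmat" where
  "comm N A B = msub (mmul N A B) (mmul N B A)"

definition sigma3 :: cmat where
  "sigma3 = (\<lambda>i j. if i = j then (if i = 0 then 1 else -1) else 0)"

definition Lam :: "nat \<Rightarrow> cmat" where
  "Lam k = (\<lambda>i j. if i = j then (if i = 0 then 1 else - sgnS k i) else 0)"

definition Qmat :: "nat \<Rightarrow> nat \<Rightarrow> cvec \<Rightarrow> cmat" where
  "Qmat N k q = (\<lambda>i j.
      if i = 0 \<and> 1 \<le> j \<and> j \<le> N then - cnj (q j) * sgnS k j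
      else if 1 \<le> i \<and> i \<le> N \<and> j = 0 then q i
      else 0)"

definition LaxU :: "complex \<Rightarrow> cmat \<Rightarrow> cmat" where
  "LaxU lam Q = (\<lambda>i j. \<i> * lam * sigma3 i j + \<i> * Q i j)"

definition LaxV :: "nat \<Rightarrow> complex \<Rightarrow> cmat \<Rightarrow> cmat \<Rightarrow> cmat" where
  "LaxV N lam Q Qx = (\<lambda>i j. \<i> * lam\<^sup>2 * sigma3 i j + \<i> * lam * Q i j
      - (1/2) * (\<i> * mmul N sigma3 (mmul N Q Q) i j - mmul N sigma3 Qx i j))"

definition lax_eqs :: "nat \<Rightarrow> (real \<times> real \<Rightarrow> cmat) \<Rightarrow> (real \<times> real \<Rightarrow> cmat) \<Rightarrow> complex
    \<Rightarrow> (real \<times> real \<Rightarrow> cvec) \<Rightarrow> bool" where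
  "lax_eqs N Q Qx lam Phi \<longleftrightarrow>
     (\<forall>i\<le>N. has_px (\<lambda>p. Phi p i) (\<lambda>p. mvec N (LaxU lam (Q p)) (Phi p) i)
           \<and> has_pt (\<lambda>p. Phi p i) (\<lambda>p. mvec N (LaxV N lam (Q p) (Qx p)) (Phi p) i))"

definition lax_solution :: "nat \<Rightarrow> nat \<Rightarrow> (real \<times> real \<Rightarrow> cvec) \<Rightarrow> (real \<times> real \<Rightarrow> cvec)
    \<Rightarrow> complex \<Rightarrow> (real \<times> real \<Rightarrow> cvec) \<Rightarrow> bool" where
  "lax_solution N k q qx lam Phi \<longleftrightarrow>
     (\<forall>i\<le>N. smooth2 (\<lambda>p. Phi p i)) \<and>
     lax_eqs N (\<lambda>p. Qmat N k (q p)) (\<lambda>p. Qmat N k (qx p)) lam Phi"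

end

theory Submission
  imports Defs
begin


definition Y :: "nat \<Rightarrow> nat \<Rightarrow> cvec \<Rightarrow> cvec \<Rightarrow> complex" where
  "Y N k u v = (\<Sum>j=1..N. sgnS k j * cnj (u j) * v j)"

lemma cnj_sgnS[simp]: "cnj (sgnS k j) = sgnS k j"
  by (simp add: sgnS_def)

lemma Y_cong: "(\<And>j. 1 \<le> j \<Longrightarrow> j \<le> N \<Longrightarrow> u j = u' j) \<Longrightarrow> (\<And>j. 1 \<le> j \<Longrightarrow> j \<le> N \<Longrightarrow> v j = v' j)
  \<Longrightarrow> Y N k u v = Y N k u' v'"
  unfolding Y_def by (intro sum.cong) auto

lemma Y_cnj: "cnj (Y N k u v) = Y N k v u"
  unfolding Y_def by (simp add: mult.commute mult.left_commute)

lemma Y_add1: "Y N k (\<lambda>j. u j + v j) w = Y N k u w + Y N k v w"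
  unfolding Y_def by (simp add: algebra_simps sum.distrib)
lemma Y_diff1: "Y N k (\<lambda>j. u j - v j) w = Y N k u w - Y N k v w"
  unfolding Y_def by (simp add: algebra_simps sum_subtractf)
lemma Y_scal1: "Y N k (\<lambda>j. c * u j) w = cnj c * Y N k u w"
  unfolding Y_def by (simp add: algebra_simps sum_distrib_left)
lemma Y_scal1': "Y N k (\<lambda>j. u j * c / d) w = cnj c / cnj d * Y N k u w"
  unfolding Y_def by (simp add: algebra_simps sum_distrib_left sum_divide_distrib)
lemma Y_add2: "Y N k w (\<lambda>j. u j + v j) = Y N k w u + Y N k w v"
  unfolding Y_def by (simp add: algebra_simps sum.distrib)
lemma Y_diff2: "Y N k w (\<lambda>j. u j - v j) = Y N k w u - Y N k w v"
  unfolding Y_def by (simp add: algebra_simps sum_subtractf)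
lemma Y_scal2: "Y N k w (\<lambda>j. c * u j) = c * Y N k w u"
  unfolding Y_def by (simp add: algebra_simps sum_distrib_left)
lemma Y_scal2': "Y N k w (\<lambda>j. u j * c / d) = c / d * Y N k w u"
  unfolding Y_def by (simp add: algebra_simps sum_distrib_left sum_divide_distrib)

lemma Y_mr1: "Y N k (\<lambda>j. u j * c) w = cnj c * Y N k u w"
  unfolding Y_def by (simp add: algebra_simps sum_distrib_left)
lemma Y_mr2: "Y N k w (\<lambda>j. u j * c) = c * Y N k w u"
  unfolding Y_def by (simp add: algebra_simps sum_distrib_left)

lemma Y_real: "cnj (Y N k u u) = Y N k u u"
  by (simp add: Y_cnj)

lemmas Y_lin = Y_mr1 Y_mr2 Y_add1 Y_diff1 Y_scal1 Y_scal1' Y_add2 Y_diff2 Y_scal2 Y_scal2'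

lemma atMost_split0: "{..N::nat} = insert 0 {1..N}" by auto

lemma mvec_Q0: "mvec N (Qmat N k q) v 0 = - Y N k q v"
proof -
  have "mvec N (Qmat N k q) v 0 = (\<Sum>j\<in>insert 0 {1..N}. Qmat N k q 0 j * v j)"
    unfolding mvec_def atMost_split0 ..
  also have "\<dots> = (\<Sum>j=1..N. - (sgnS k j * cnj (q j) * v j))"
    by (subst sum.insert) (auto simp: Qmat_def intro!: sum.cong)
  finally show ?thesis by (simp add: Y_def sum_negf)
qed

lemma mvec_Qj: "1 \<le> i \<Longrightarrow> i \<le> N \<Longrightarrow> mvec N (Qmat N k q) v i = q i * v 0"
proof -
  assume i: "1 \<le> i" "i \<le> N"
  have "mvec N (Qmat N k q) v i = (\<Sum>j\<in>insert 0 {1..N}. Qmat N k q i j * v j)"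
    unfolding mvec_def atMost_split0 ..
  also have "\<dots> = q i * v 0"
    using i by (subst sum.insert) (auto simp: Qmat_def)
  finally show ?thesis .
qed

lemma mvec_diag: "i \<le> N \<Longrightarrow> mvec N (\<lambda>i j. if i = j then d i else 0) v i = d i * v i"
proof -
  assume "i \<le> N"
  have eq: "(\<lambda>j. (if i = j then d i else 0) * v j) = (\<lambda>j. if i = j then d i * v j else 0)" by auto
  show ?thesis using \<open>i \<le> N\<close> unfolding mvec_def eq by simp
qed

lemma sigma3_diag: "sigma3 = (\<lambda>i j. if i = j then (if i = 0 then 1 else -1) else 0)"
  by (simp add: sigma3_def)

lemma mvec_s3: "i \<le> N \<Longrightarrow> mvec N sigma3 v i = (if i = 0 then v i else - v i)"
  unfolding sigma3_diag by (subst mvec_diag) auto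

lemma mvec_mmul: "mvec N (mmul N A B) v = mvec N A (mvec N B v)"
  unfolding mvec_def mmul_def
  by (auto simp: sum_distrib_right sum_distrib_left mult.assoc intro: sum.swap)

lemma mvec_U: "mvec N (LaxU lam Q) v i = \<i>*lam*mvec N sigma3 v i + \<i>*mvec N Q v i"
  unfolding mvec_def LaxU_def by (simp add: algebra_simps sum.distrib sum_distrib_left)

lemma mvec_V: "mvec N (LaxV N lam Q Qx) v i = \<i>*lam^2*mvec N sigma3 v i + \<i>*lam*mvec N Q v i
   - 1/2*(\<i>*mvec N sigma3 (mvec N Q (mvec N Q v)) i - mvec N sigma3 (mvec N Qx v) i)"
  unfolding LaxV_def mvec_mmul[symmetric]
  unfolding mvec_def by (simp add: algebra_simps sum.distrib sum_distrib_left sum_subtractf)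

lemma mvecU0: "mvec N (LaxU lam (Qmat N k q)) v 0 = \<i>*lam* v 0 - \<i>*Y N k q v"
  by (simp add: mvec_U mvec_s3 mvec_Q0)

lemma mvecUj: "1 \<le> j \<Longrightarrow> j \<le> N \<Longrightarrow>
   mvec N (LaxU lam (Qmat N k q)) v j = (-\<i>*lam)* v j + (\<i>* v 0)*q j"
  by (simp add: mvec_U mvec_s3 mvec_Qj)

lemma Y_mvecQ: "Y N k u (mvec N (Qmat N k q) v) = v 0 * Y N k u q"
proof -
  have "Y N k u (mvec N (Qmat N k q) v) = Y N k u (\<lambda>j. v 0 * q j)"
    by (rule Y_cong) (auto simp: mvec_Qj)
  then show ?thesis by (simp add: Y_lin)
qed

lemma mvecV0: "mvec N (LaxV N lam (Qmat N k q) (Qmat N k qx)) v 0 =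
   \<i>*lam^2* v 0 - \<i>*lam*Y N k q v + (1/2*\<i>)*Y N k q q* v 0 - 1/2*Y N k qx v"
  by (simp add: mvec_V mvec_s3 mvec_Q0 Y_mvecQ algebra_simps)

lemma mvecVj: "1 \<le> j \<Longrightarrow> j \<le> N \<Longrightarrow>
   mvec N (LaxV N lam (Qmat N k q) (Qmat N k qx)) v j =
   (-\<i>*lam^2)* v j + (\<i>*lam* v 0 - (1/2*\<i>)*Y N k q v)*q j + (-1/2* v 0)*qx j"
  by (simp add: mvec_V mvec_s3 mvec_Q0 mvec_Qj algebra_simps)

lemma Y_U2: "Y N k u (mvec N (LaxU lam (Qmat N k q)) v) = (-\<i>*lam)*Y N k u v + (\<i>* v 0)*Y N k u q"
proof -
  have "Y N k u (mvec N (LaxU lam (Qmat N k q)) v) = Y N k u (\<lambda>j. (-\<i>*lam)* v j + (\<i>* v 0)*q j)"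
    by (rule Y_cong) (auto simp: mvecUj)
  then show ?thesis by (simp add: Y_lin)
qed

lemma Y_U1: "Y N k (mvec N (LaxU lam (Qmat N k q)) u) v = cnj (-\<i>*lam)*Y N k u v + cnj (\<i>*u 0)*Y N k q v"
proof -
  have "Y N k (mvec N (LaxU lam (Qmat N k q)) u) v = Y N k (\<lambda>j. (-\<i>*lam)*u j + (\<i>*u 0)*q j) v"
    by (rule Y_cong) (auto simp: mvecUj)
  then show ?thesis by (simp only: Y_lin)
qed

lemma Y_V2: "Y N k u (mvec N (LaxV N lam (Qmat N k q) (Qmat N k qx)) v) =
   (-\<i>*lam^2)*Y N k u v + (\<i>*lam* v 0 - (1/2*\<i>)*Y N k q v)*Y N k u q + (-1/2* v 0)*Y N k u qx"
proof -
  have "Y N k u (mvec N (LaxV N lam (Qmat N k q) (Qmat N k qx)) v) =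
     Y N k u (\<lambda>j. (-\<i>*lam^2)* v j + (\<i>*lam* v 0 - (1/2*\<i>)*Y N k q v)*q j + (-1/2* v 0)*qx j)"
    by (rule Y_cong) (auto simp: mvecVj)
  then show ?thesis by (simp only: Y_lin)
qed

lemma Y_V1: "Y N k (mvec N (LaxV N lam (Qmat N k q) (Qmat N k qx)) u) v =
   cnj (-\<i>*lam^2)*Y N k u v + cnj (\<i>*lam*u 0 - (1/2*\<i>)*Y N k q u)*Y N k q v + cnj (-1/2*u 0)*Y N k qx v"
proof -
  have "Y N k (mvec N (LaxV N lam (Qmat N k q) (Qmat N k qx)) u) v =
     Y N k (\<lambda>j. (-\<i>*lam^2)*u j + (\<i>*lam*u 0 - (1/2*\<i>)*Y N k q u)*q j + (-1/2*u 0)*qx j) v"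
    by (rule Y_cong) (auto simp: mvecVj)
  then show ?thesis by (simp only: Y_lin)
qed

lemma hform_mvec: "hform N u M v = (\<Sum>i\<le>N. cnj (u i) * mvec N M v i)"
  unfolding hform_def mvec_def by (simp add: sum_distrib_left mult.assoc)

lemma sum_split0: "(\<Sum>i\<le>(N::nat). f i) = f 0 + (\<Sum>i=1..N. f i)"
  by (subst atMost_split0) simp

lemma Lam_diag: "Lam k = (\<lambda>i j. if i = j then (if i = 0 then 1 else - sgnS k i) else 0)"
  by (simp add: Lam_def)

lemma mvec_Lam: "i \<le> N \<Longrightarrow> mvec N (Lam k) v i = (if i = 0 then v i else - sgnS k i * v i)"
  unfolding Lam_diag by (subst mvec_diag) auto

lemma hform_Lam: "hform N u (Lam k) v = cnj (u 0) * v 0 - Y N k u v"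
proof -
  have "hform N u (Lam k) v = cnj (u 0) * v 0 + (\<Sum>i=1..N. - (sgnS k i * cnj (u i) * v i))"
    unfolding hform_mvec sum_split0 by (auto simp: mvec_Lam intro!: sum.cong)
  then show ?thesis by (simp add: Y_def sum_negf)
qed

lemma hform_LamS: "hform N u (mmul N (Lam k) sigma3) v = cnj (u 0) * v 0 + Y N k u v"
proof -
  have "hform N u (mmul N (Lam k) sigma3) v = cnj (u 0) * v 0 + (\<Sum>i=1..N. (sgnS k i * cnj (u i) * v i))"
    unfolding hform_mvec sum_split0 mvec_mmul by (auto simp: mvec_Lam mvec_s3 intro!: sum.cong)
  then show ?thesis by (simp add: Y_def)
qed

lemma hform_LamQ: "hform N u (mmul N (Lam k) (Qmat N k q)) v = - cnj (u 0) * Y N k q v - Y N k u q * v 0"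
proof -
  have "hform N u (mmul N (Lam k) (Qmat N k q)) v = - cnj (u 0) * Y N k q v
      + (\<Sum>i=1..N. - (sgnS k i * cnj (u i) * q i) * v 0)"
    unfolding hform_mvec sum_split0 mvec_mmul by (auto simp: mvec_Lam mvec_Q0 mvec_Qj intro!: sum.cong)
  then show ?thesis by (simp add: Y_def sum_negf sum_distrib_right)
qed



lemma px_cong: "has_px f g \<Longrightarrow> (\<And>p. g p = g' p) \<Longrightarrow> has_px f g'"
  unfolding has_px_def by simp
lemma pt_cong: "has_pt f g \<Longrightarrow> (\<And>p. g p = g' p) \<Longrightarrow> has_pt f g'"
  unfolding has_pt_def by simp

lemma px_add: "has_px f f' \<Longrightarrow> has_px g g' \<Longrightarrow> has_px (\<lambda>p. f p + g p) (\<lambda>p. f' p + g' p)"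
  unfolding has_px_def by (auto intro!: derivative_eq_intros)
lemma pt_add: "has_pt f f' \<Longrightarrow> has_pt g g' \<Longrightarrow> has_pt (\<lambda>p. f p + g p) (\<lambda>p. f' p + g' p)"
  unfolding has_pt_def by (auto intro!: derivative_eq_intros)
lemma px_diff: "has_px f f' \<Longrightarrow> has_px g g' \<Longrightarrow> has_px (\<lambda>p. f p - g p) (\<lambda>p. f' p - g' p)"
  unfolding has_px_def by (auto intro!: derivative_eq_intros)
lemma pt_diff: "has_pt f f' \<Longrightarrow> has_pt g g' \<Longrightarrow> has_pt (\<lambda>p. f p - g p) (\<lambda>p. f' p - g' p)"
  unfolding has_pt_def by (auto intro!: derivative_eq_intros)
lemma px_mult: "has_px f f' \<Longrightarrow> has_px g g' \<Longrightarrow> has_px (\<lambda>p. f p * g p) (\<lambda>p. f p * g' p + f' p * g p)"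
  unfolding has_px_def by (auto intro!: derivative_eq_intros)
lemma pt_mult: "has_pt f f' \<Longrightarrow> has_pt g g' \<Longrightarrow> has_pt (\<lambda>p. f p * g p) (\<lambda>p. f p * g' p + f' p * g p)"
  unfolding has_pt_def by (auto intro!: derivative_eq_intros)
lemma px_cnj: "has_px f f' \<Longrightarrow> has_px (\<lambda>p. cnj (f p)) (\<lambda>p. cnj (f' p))"
  unfolding has_px_def by (auto intro!: derivative_eq_intros)
lemma pt_cnj: "has_pt f f' \<Longrightarrow> has_pt (\<lambda>p. cnj (f p)) (\<lambda>p. cnj (f' p))"
  unfolding has_pt_def by (auto intro!: derivative_eq_intros)
lemma px_const: "has_px (\<lambda>p. c) (\<lambda>p. 0)"
  unfolding has_px_def by (auto intro!: derivative_eq_intros)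
lemma pt_const: "has_pt (\<lambda>p. c) (\<lambda>p. 0)"
  unfolding has_pt_def by (auto intro!: derivative_eq_intros)
lemma px_cmult: "has_px f f' \<Longrightarrow> has_px (\<lambda>p. c * f p) (\<lambda>p. c * f' p)"
  unfolding has_px_def by (auto intro!: derivative_eq_intros)
lemma pt_cmult: "has_pt f f' \<Longrightarrow> has_pt (\<lambda>p. c * f p) (\<lambda>p. c * f' p)"
  unfolding has_pt_def by (auto intro!: derivative_eq_intros)
lemma px_divc: "has_px f f' \<Longrightarrow> has_px (\<lambda>p. f p / c) (\<lambda>p. f' p / c)"
  unfolding has_px_def by (auto intro!: derivative_eq_intros)
lemma pt_divc: "has_pt f f' \<Longrightarrow> has_pt (\<lambda>p. f p / c) (\<lambda>p. f' p / c)"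
  unfolding has_pt_def by (auto intro!: derivative_eq_intros)
lemma px_sum: "(\<And>i. i \<in> I \<Longrightarrow> has_px (f i) (f' i)) \<Longrightarrow> has_px (\<lambda>p. \<Sum>i\<in>I. f i p) (\<lambda>p. \<Sum>i\<in>I. f' i p)"
  unfolding has_px_def by (auto intro!: derivative_eq_intros)
lemma pt_sum: "(\<And>i. i \<in> I \<Longrightarrow> has_pt (f i) (f' i)) \<Longrightarrow> has_pt (\<lambda>p. \<Sum>i\<in>I. f i p) (\<lambda>p. \<Sum>i\<in>I. f' i p)"
  unfolding has_pt_def by (auto intro!: derivative_eq_intros)

lemma vd_inverse:
  assumes "(f has_vector_derivative f') (at x)" "f x \<noteq> (0::complex)"
  shows "((\<lambda>s. inverse (f s)) has_vector_derivative (- f' * inverse (f x) ^ 2)) (at x)"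
proof -
  have "((inverse \<circ> f) has_vector_derivative (f' * (- (inverse (f x) ^ Suc (Suc 0))))) (at x)"
    by (rule field_vector_diff_chain_at[OF assms(1)]) (rule DERIV_inverse[OF assms(2)])
  then show ?thesis by (simp add: o_def power2_eq_square)
qed

lemma px_inverse: "(\<And>p. f p \<noteq> 0) \<Longrightarrow> has_px f f' \<Longrightarrow>
    has_px (\<lambda>p. inverse (f p)) (\<lambda>p. - f' p * inverse (f p) ^ 2)"
  unfolding has_px_def using vd_inverse[where f="\<lambda>s. f (s, _)"] by fastforce
lemma pt_inverse: "(\<And>p. f p \<noteq> 0) \<Longrightarrow> has_pt f f' \<Longrightarrow>
    has_pt (\<lambda>p. inverse (f p)) (\<lambda>p. - f' p * inverse (f p) ^ 2)"
  unfolding has_pt_def using vd_inverse[where f="\<lambda>s. f (_, s)"] by fastforce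

lemma px_Y:
  assumes u: "\<And>j. 1 \<le> j \<Longrightarrow> j \<le> N \<Longrightarrow> has_px (\<lambda>p. u p j) (\<lambda>p. u' p j)"
    and v: "\<And>j. 1 \<le> j \<Longrightarrow> j \<le> N \<Longrightarrow> has_px (\<lambda>p. v p j) (\<lambda>p. v' p j)"
  shows "has_px (\<lambda>p. Y N k (u p) (v p)) (\<lambda>p. Y N k (u p) (v' p) + Y N k (u' p) (v p))"
  unfolding Y_def
  apply (rule px_cong)
   apply (rule px_sum)
   apply (rule px_mult)
    apply (rule px_cmult)
    apply (rule px_cnj)
    apply (rule u; simp)
   apply (rule v; simp)
  apply (simp add: sum.distrib[symmetric] algebra_simps)
  done

lemma pt_Y:
  assumes u: "\<And>j. 1 \<le> j \<Longrightarrow> j \<le> N \<Longrightarrow> has_pt (\<lambda>p. u p j) (\<lambda>p. u' p j)"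
    and v: "\<And>j. 1 \<le> j \<Longrightarrow> j \<le> N \<Longrightarrow> has_pt (\<lambda>p. v p j) (\<lambda>p. v' p j)"
  shows "has_pt (\<lambda>p. Y N k (u p) (v p)) (\<lambda>p. Y N k (u p) (v' p) + Y N k (u' p) (v p))"
  unfolding Y_def
  apply (rule pt_cong)
   apply (rule pt_sum)
   apply (rule pt_mult)
    apply (rule pt_cmult)
    apply (rule pt_cnj)
    apply (rule u; simp)
   apply (rule v; simp)
  apply (simp add: sum.distrib[symmetric] algebra_simps)
  done

lemma px_div: "has_px f f' \<Longrightarrow> has_px g g' \<Longrightarrow> (\<And>p. g p \<noteq> 0) \<Longrightarrow>
   has_px (\<lambda>p. f p / g p) (\<lambda>p. f' p * inverse (g p) - f p * g' p * inverse (g p) ^ 2)"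
  apply (rule px_cong)
   apply (unfold divide_inverse)
   apply (rule px_mult, assumption, rule px_inverse; assumption)
  apply (simp add: algebra_simps)
  done
lemma pt_div: "has_pt f f' \<Longrightarrow> has_pt g g' \<Longrightarrow> (\<And>p. g p \<noteq> 0) \<Longrightarrow>
   has_pt (\<lambda>p. f p / g p) (\<lambda>p. f' p * inverse (g p) - f p * g' p * inverse (g p) ^ 2)"
  apply (rule pt_cong)
   apply (unfold divide_inverse)
   apply (rule pt_mult, assumption, rule pt_inverse; assumption)
  apply (simp add: algebra_simps)
  done

lemma mmul_diagL: "i \<le> N \<Longrightarrow> mmul N (\<lambda>i j. if i = j then d i else 0) B i j = d i * B i j"
proof -
  assume i: "i \<le> N"
  have eq: "(\<lambda>l. (if i = l then d i else 0) * B l j) = (\<lambda>l. if i = l then d i * B l j else 0)" by auto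
  show ?thesis using i unfolding mmul_def eq by simp
qed
lemma mmul_diagR: "j \<le> N \<Longrightarrow> mmul N A (\<lambda>i j. if i = j then d i else 0) i j = A i j * d j"
proof -
  assume j: "j \<le> N"
  have eq: "(\<lambda>l. A i l * (if l = j then d l else 0)) = (\<lambda>l. if l = j then A i j * d j else 0)" by auto
  show ?thesis using j unfolding mmul_def eq by simp
qed

lemmas CNJ = complex_cnj_add complex_cnj_diff complex_cnj_mult complex_cnj_divide complex_cnj_minus
  complex_cnj_i complex_cnj_cnj complex_cnj_one complex_cnj_zero complex_cnj_numeral complex_cnj_power
  complex_cnj_inverse Y_cnj



lemma inv_eqI: "c \<noteq> 0 \<Longrightarrow> X = Z * c \<Longrightarrow> X * inverse c = (Z::complex)"
  by simp

lemma msub_app: "msub A B i j = A i j - B i j" by (simp add: msub_def)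
lemma mscale_app: "mscale c A i j = c * A i j" by (simp add: mscale_def)

theorem mainTheorem2:
  fixes N k :: nat
    and q qx :: "real \<times> real \<Rightarrow> cvec"
    and lam1 lam :: complex
    and Phi1 Phi :: "real \<times> real \<Rightarrow> cvec"
    and Om11 :: "real \<times> real \<Rightarrow> complex"
  assumes "1 \<le> N" and "k \<le> N"
    and q_smooth: "\<forall>l. 1 \<le> l \<and> l \<le> N \<longrightarrow> smooth2 (\<lambda>p. q p l)"
    and qx: "\<forall>l. 1 \<le> l \<and> l \<le> N \<longrightarrow> has_px (\<lambda>p. q p l) (\<lambda>p. qx p l)"
    and sol1: "lax_solution N k q qx lam1 Phi1"
    and sol: "lax_solution N k q qx lam Phi"
    and lam_ne: "lam \<noteq> cnj lam1"
    and Om_nonreal: "lam1 \<notin> \<real> \<Longrightarrow>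
          Om11 = (\<lambda>p. hform N (Phi1 p) (Lam k) (Phi1 p) / (\<i> * (lam1 - cnj lam1)))"
    and Om_real: "lam1 \<in> \<real> \<Longrightarrow>
          (\<forall>p. hform N (Phi1 p) (Lam k) (Phi1 p) = 0) \<and>
          smooth2 Om11 \<and> (\<forall>p. Om11 p \<in> \<real>) \<and>
          has_px Om11 (\<lambda>p. hform N (Phi1 p) (mmul N (Lam k) sigma3) (Phi1 p)) \<and>
          has_pt Om11 (\<lambda>p. (lam1 + cnj lam1) * hform N (Phi1 p) (mmul N (Lam k) sigma3) (Phi1 p)
                           + hform N (Phi1 p) (mmul N (Lam k) (Qmat N k (q p))) (Phi1 p))"
    and Om_nz: "\<forall>p. Om11 p \<noteq> 0"
  shows "let Om1 = (\<lambda>p. hform N (Phi1 p) (Lam k) (Phi p) / (\<i> * (lam - cnj lam1)));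
             PhiNew = (\<lambda>p i. Phi p i - Phi1 p i * Om1 p / Om11 p);
             QNew = (\<lambda>p. msub (Qmat N k (q p))
                       (mscale \<i> (comm N sigma3
                          (mscale (1 / Om11 p) (mmul N (outer (Phi1 p) (Phi1 p)) (Lam k))))))
         in \<exists>q1 q1x :: real \<times> real \<Rightarrow> cvec.
              (\<forall>p i j. i \<le> N \<and> j \<le> N \<longrightarrow> QNew p i j = Qmat N k (q1 p) i j) \<and>
              (\<forall>l. 1 \<le> l \<and> l \<le> N \<longrightarrow> has_px (\<lambda>p. q1 p l) (\<lambda>p. q1x p l)) \<and>
              lax_eqs N (\<lambda>p. Qmat N k (q1 p)) (\<lambda>p. Qmat N k (q1x p)) lam PhiNew"
proof -
  from sol1 have e1: "lax_eqs N (\<lambda>p. Qmat N k (q p)) (\<lambda>p. Qmat N k (qx p)) lam1 Phi1"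
    by (simp add: lax_solution_def)
  from sol have e: "lax_eqs N (\<lambda>p. Qmat N k (q p)) (\<lambda>p. Qmat N k (qx p)) lam Phi"
    by (simp add: lax_solution_def)
  have a_x: "\<And>i. i \<le> N \<Longrightarrow> has_px (\<lambda>p. Phi1 p i) (\<lambda>p. mvec N (LaxU lam1 (Qmat N k (q p))) (Phi1 p) i)"
    using e1 by (simp add: lax_eqs_def)
  have a_t: "\<And>i. i \<le> N \<Longrightarrow> has_pt (\<lambda>p. Phi1 p i) (\<lambda>p. mvec N (LaxV N lam1 (Qmat N k (q p)) (Qmat N k (qx p))) (Phi1 p) i)"
    using e1 by (simp add: lax_eqs_def)
  have b_x: "\<And>i. i \<le> N \<Longrightarrow> has_px (\<lambda>p. Phi p i) (\<lambda>p. mvec N (LaxU lam (Qmat N k (q p))) (Phi p) i)"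
    using e by (simp add: lax_eqs_def)
  have b_t: "\<And>i. i \<le> N \<Longrightarrow> has_pt (\<lambda>p. Phi p i) (\<lambda>p. mvec N (LaxV N lam (Qmat N k (q p)) (Qmat N k (qx p))) (Phi p) i)"
    using e by (simp add: lax_eqs_def)
  define c where "c = \<i>*(lam - cnj lam1)"
  define c1 where "c1 = \<i>*(lam1 - cnj lam1)"
  have two: "2 * inverse 2 = (1::complex)" by simp
  have c_nz: "c \<noteq> 0" using lam_ne by (simp add: c_def)
  define Omx where "Omx = (\<lambda>p. cnj (Phi1 p 0) * Phi1 p 0 + Y N k (Phi1 p) (Phi1 p))"
  define Omt where "Omt = (\<lambda>p. (lam1 + cnj lam1) * (cnj (Phi1 p 0) * Phi1 p 0 + Y N k (Phi1 p) (Phi1 p))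
      - cnj (Phi1 p 0) * Y N k (q p) (Phi1 p) - Y N k (Phi1 p) (q p) * Phi1 p 0)"
  have OmF: "(\<forall>p. cnj (Om11 p) = Om11 p) \<and>
     (\<forall>p. cnj (Phi1 p 0) * Phi1 p 0 - Y N k (Phi1 p) (Phi1 p) = c1 * Om11 p) \<and>
     has_px Om11 Omx \<and> has_pt Om11 Omt"
  proof (cases "lam1 \<in> \<real>")
    case True
    note H = Om_real[OF True]
    have l1: "cnj lam1 = lam1" using True by (simp add: Reals_cnj_iff)
    have "\<forall>p. cnj (Om11 p) = Om11 p" using H by (simp add: Reals_cnj_iff)
    moreover have "\<forall>p. cnj (Phi1 p 0) * Phi1 p 0 - Y N k (Phi1 p) (Phi1 p) = c1 * Om11 p"
      using H by (simp add: hform_Lam c1_def l1)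
    moreover have "has_px Om11 Omx"
      using H by (auto simp: hform_LamS Omx_def)
    moreover have "has_pt Om11 Omt"
      using H by (auto simp: hform_LamS hform_LamQ Omt_def algebra_simps)
    ultimately show ?thesis by blast
  next
    case False
    have c1nz: "c1 \<noteq> 0" using False unfolding c1_def
      by (metis Reals_cnj_iff mult_eq_0_iff complex_i_not_zero eq_iff_diff_eq_0)
    have Omeq: "Om11 = (\<lambda>p. (cnj (Phi1 p 0) * Phi1 p 0 - Y N k (Phi1 p) (Phi1 p)) / c1)"
      using Om_nonreal[OF False] by (simp add: hform_Lam c1_def)
    have l1c: "cnj lam1 = lam1 + \<i> * c1" by (simp add: c1_def algebra_simps)
    have cc1: "cnj c1 = c1" by (simp add: c1_def algebra_simps)
    have "\<forall>p. cnj (Om11 p) = Om11 p" unfolding Omeq by (simp add: cc1 Y_cnj)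
    moreover have "\<forall>p. cnj (Phi1 p 0) * Phi1 p 0 - Y N k (Phi1 p) (Phi1 p) = c1 * Om11 p"
      unfolding Omeq using c1nz by simp
    moreover have "has_px Om11 Omx"
      unfolding Omeq
      apply (rule px_cong)
       apply (rule px_divc px_diff px_mult px_cnj)+
          apply (rule a_x; simp)
         apply (rule a_x; simp)
        apply (rule px_Y)
         apply (rule a_x; simp)
        apply (rule a_x; simp)
      apply (unfold Omx_def)
      apply (simp only: mvecU0 Y_U1 Y_U2 CNJ divide_inverse[of _ c1])
      using right_inverse[OF c1nz] i_squared c1_def by algebra
    moreover have "has_pt Om11 Omt"
      unfolding Omeq
      apply (rule pt_cong)
       apply (rule pt_divc pt_diff pt_mult pt_cnj)+
          apply (rule a_t; simp)
         apply (rule a_t; simp)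
        apply (rule pt_Y)
         apply (rule a_t; simp)
        apply (rule a_t; simp)
      apply (unfold Omt_def)
      apply (simp only: mvecV0 Y_V1 Y_V2 CNJ divide_inverse[of _ c1])
      apply (rule inv_eqI[OF c1nz])
      apply (simp only: l1c)
      using i_squared by algebra
    ultimately show ?thesis by blast
  qed
  have OmR: "\<And>p. cnj (Om11 p) = Om11 p" using OmF by blast
  have OmYaa: "\<And>p. Y N k (Phi1 p) (Phi1 p) = cnj (Phi1 p 0) * Phi1 p 0 - \<i>*(lam1 - cnj lam1) * Om11 p"
  proof -
    fix p
    have h: "cnj (Phi1 p 0) * Phi1 p 0 - Y N k (Phi1 p) (Phi1 p) = c1 * Om11 p" using OmF by blast
    have "Y N k (Phi1 p) (Phi1 p) = cnj (Phi1 p 0) * Phi1 p 0 - (cnj (Phi1 p 0) * Phi1 p 0 - Y N k (Phi1 p) (Phi1 p))"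
      by simp
    also have "\<dots> = cnj (Phi1 p 0) * Phi1 p 0 - \<i>*(lam1 - cnj lam1) * Om11 p" unfolding h c1_def ..
    finally show "Y N k (Phi1 p) (Phi1 p) = cnj (Phi1 p 0) * Phi1 p 0 - \<i>*(lam1 - cnj lam1) * Om11 p" .
  qed
  have OmPx: "has_px Om11 Omx" and OmPt: "has_pt Om11 Omt" using OmF by blast+
  define Om1 where "Om1 = (\<lambda>p. hform N (Phi1 p) (Lam k) (Phi p) / (\<i> * (lam - cnj lam1)))"
  have Om1eq: "Om1 = (\<lambda>p. (cnj (Phi1 p 0) * Phi p 0 - Y N k (Phi1 p) (Phi p)) / c)"
    unfolding Om1_def c_def by (simp add: hform_Lam)
  have Yab: "\<And>p. Y N k (Phi1 p) (Phi p) = cnj (Phi1 p 0) * Phi p 0 - c * Om1 p"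
    unfolding Om1eq using c_nz by simp
  have lamc: "lam = cnj lam1 - \<i> * c" unfolding c_def by (simp add: algebra_simps)
  define Wx where "Wx = (\<lambda>p. cnj (Phi1 p 0) * Phi p 0 + Y N k (Phi1 p) (Phi p))"
  define Wt where "Wt = (\<lambda>p. (lam + cnj lam1) * (cnj (Phi1 p 0) * Phi p 0 + Y N k (Phi1 p) (Phi p))
      - cnj (Phi1 p 0) * Y N k (q p) (Phi p) - Y N k (Phi1 p) (q p) * Phi p 0)"
  have WPx: "has_px Om1 Wx"
      unfolding Om1eq
      apply (rule px_cong)
       apply (rule px_divc px_diff px_mult px_cnj)+
          apply (rule a_x; simp)
         apply (rule b_x; simp)
        apply (rule px_Y)
         apply (rule a_x; simp)
        apply (rule b_x; simp)
      apply (unfold Wx_def)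
      apply (simp only: mvecU0 Y_U1 Y_U2 CNJ divide_inverse[of _ c])
      apply (rule inv_eqI[OF c_nz])
      apply (simp only: lamc)
      using i_squared by algebra
  have WPt: "has_pt Om1 Wt"
      unfolding Om1eq
      apply (rule pt_cong)
       apply (rule pt_divc pt_diff pt_mult pt_cnj)+
          apply (rule a_t; simp)
         apply (rule b_t; simp)
        apply (rule pt_Y)
         apply (rule a_t; simp)
        apply (rule b_t; simp)
      apply (unfold Wt_def)
      apply (simp only: mvecV0 Y_V1 Y_V2 CNJ divide_inverse[of _ c])
      apply (rule inv_eqI[OF c_nz])
      apply (simp only: lamc)
      by (simp add: algebra_simps power2_eq_square)
  define bt where "bt = (\<lambda>p. 2*\<i>*cnj (Phi1 p 0) / Om11 p)"
  define btx where "btx = (\<lambda>p. 2*\<i>*cnj (mvec N (LaxU lam1 (Qmat N k (q p))) (Phi1 p) 0) * inverse (Om11 p)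
      - 2*\<i>*cnj (Phi1 p 0) * Omx p * inverse (Om11 p) ^ 2)"
  define q1 where "q1 = (\<lambda>p j. q p j + bt p * Phi1 p j)"
  define q1x where "q1x = (\<lambda>p j. qx p j + (bt p * (-\<i>*lam1) + btx p) * Phi1 p j + (bt p * (\<i> * Phi1 p 0)) * q p j)"
  have btPx: "has_px bt btx"
    unfolding bt_def btx_def
    apply (rule px_cong)
     apply (rule px_div)
       apply (rule px_cmult, rule px_cnj, rule a_x, simp)
      apply (rule OmPx)
     apply (rule Om_nz[rule_format])
    apply (simp add: algebra_simps)
    done
  have q1Px: "\<forall>l. 1 \<le> l \<and> l \<le> N \<longrightarrow> has_px (\<lambda>p. q1 p l) (\<lambda>p. q1x p l)"
  proof (intro allI impI)
    fix l assume l: "1 \<le> l \<and> l \<le> N"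
    show "has_px (\<lambda>p. q1 p l) (\<lambda>p. q1x p l)"
      unfolding q1_def
      apply (rule px_cong)
       apply (rule px_add)
        apply (rule qx[rule_format, OF l])
       apply (rule px_mult, rule btPx, rule a_x)
      using l apply simp
      using l by (simp add: q1x_def mvecUj algebra_simps)
  qed
  have QN: "\<And>p i j. i \<le> N \<Longrightarrow> j \<le> N \<Longrightarrow> msub (Qmat N k (q p)) (mscale \<i> (comm N sigma3
      (mscale (1 / Om11 p) (mmul N (outer (Phi1 p) (Phi1 p)) (Lam k))))) i j = Qmat N k (q1 p) i j"
  proof -
    fix p i j assume ij: "i \<le> N" "j \<le> N"
    have M: "mscale (1 / Om11 p) (mmul N (outer (Phi1 p) (Phi1 p)) (Lam k)) i' j' =
        Phi1 p i' * cnj (Phi1 p j') * (if j' = 0 then 1 else - sgnS k j') / Om11 p" if "j' \<le> N" for i' j'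
      using that unfolding mscale_def Lam_diag by (simp add: mmul_diagR outer_def)
    have C: "comm N sigma3 (mscale (1 / Om11 p) (mmul N (outer (Phi1 p) (Phi1 p)) (Lam k))) i j =
       ((if i = 0 then 1 else -1) - (if j = 0 then 1 else -1)) *
        (Phi1 p i * cnj (Phi1 p j) * (if j = 0 then 1 else - sgnS k j) / Om11 p)"
      using ij unfolding comm_def msub_def sigma3_diag
      by (simp add: mmul_diagL mmul_diagR M algebra_simps)
    have cb: "cnj (bt p) = - 2 * \<i> * Phi1 p 0 / Om11 p" unfolding bt_def by (simp add: OmR)
    show "msub (Qmat N k (q p)) (mscale \<i> (comm N sigma3
      (mscale (1 / Om11 p) (mmul N (outer (Phi1 p) (Phi1 p)) (Lam k))))) i j = Qmat N k (q1 p) i j"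
      using ij unfolding msub_app mscale_app C OmR
      by (auto simp: Qmat_def q1_def cb bt_def OmR field_simps)
  qed
  have OmI: "\<And>p. Om11 p * inverse (Om11 p) = 1" by (rule right_inverse) (use Om_nz in blast)
  have PNx: "has_px (\<lambda>p. Phi p i - Phi1 p i * Om1 p / Om11 p)
      (\<lambda>p. mvec N (LaxU lam (Qmat N k (q1 p))) (\<lambda>i. Phi p i - Phi1 p i * Om1 p / Om11 p) i)"
    if i: "i \<le> N" for i
  proof (rule px_cong)
    show "has_px (\<lambda>p. Phi p i - Phi1 p i * Om1 p / Om11 p)
      (\<lambda>p. mvec N (LaxU lam (Qmat N k (q p))) (Phi p) i -
        ((Phi1 p i * Wx p + mvec N (LaxU lam1 (Qmat N k (q p))) (Phi1 p) i * Om1 p) * inverse (Om11 p)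
         - Phi1 p i * Om1 p * Omx p * inverse (Om11 p) ^ 2))"
      by (intro px_diff px_div px_mult b_x a_x i WPx OmPx Om_nz[rule_format])
    fix p
    show "mvec N (LaxU lam (Qmat N k (q p))) (Phi p) i -
        ((Phi1 p i * Wx p + mvec N (LaxU lam1 (Qmat N k (q p))) (Phi1 p) i * Om1 p) * inverse (Om11 p)
         - Phi1 p i * Om1 p * Omx p * inverse (Om11 p) ^ 2) =
       mvec N (LaxU lam (Qmat N k (q1 p))) (\<lambda>i. Phi p i - Phi1 p i * Om1 p / Om11 p) i"
    proof (cases "i = 0")
      case True
      show ?thesis unfolding True
        apply (simp only: mvecU0 Wx_def Omx_def Y_lin q1_def bt_def CNJ OmR Yab OmYaa lamc
            divide_inverse[of _ "Om11 p"])
        using OmI[of p] i_squared by algebra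
    next
      case False
      then have i1: "1 \<le> i" by simp
      show ?thesis
        apply (simp only: mvecU0 mvecUj[OF i1 i] Wx_def Omx_def Y_lin q1_def bt_def CNJ OmR Yab OmYaa lamc
            divide_inverse[of _ "Om11 p"])
        using OmI[of p] i_squared by algebra
    qed
  qed
  have PNt: "has_pt (\<lambda>p. Phi p i - Phi1 p i * Om1 p / Om11 p)
      (\<lambda>p. mvec N (LaxV N lam (Qmat N k (q1 p)) (Qmat N k (q1x p))) (\<lambda>i. Phi p i - Phi1 p i * Om1 p / Om11 p) i)"
    if i: "i \<le> N" for i
  proof (rule pt_cong)
    show "has_pt (\<lambda>p. Phi p i - Phi1 p i * Om1 p / Om11 p)
      (\<lambda>p. mvec N (LaxV N lam (Qmat N k (q p)) (Qmat N k (qx p))) (Phi p) i -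
        ((Phi1 p i * Wt p + mvec N (LaxV N lam1 (Qmat N k (q p)) (Qmat N k (qx p))) (Phi1 p) i * Om1 p) * inverse (Om11 p)
         - Phi1 p i * Om1 p * Omt p * inverse (Om11 p) ^ 2))"
      by (intro pt_diff pt_div pt_mult b_t a_t i WPt OmPt Om_nz[rule_format])
    fix p
    show "mvec N (LaxV N lam (Qmat N k (q p)) (Qmat N k (qx p))) (Phi p) i -
        ((Phi1 p i * Wt p + mvec N (LaxV N lam1 (Qmat N k (q p)) (Qmat N k (qx p))) (Phi1 p) i * Om1 p) * inverse (Om11 p)
         - Phi1 p i * Om1 p * Omt p * inverse (Om11 p) ^ 2) =
       mvec N (LaxV N lam (Qmat N k (q1 p)) (Qmat N k (q1x p))) (\<lambda>i. Phi p i - Phi1 p i * Om1 p / Om11 p) i"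
    proof (cases "i = 0")
      case True
      show ?thesis unfolding True
        apply (simp only: mvecV0 mvecU0 Wt_def Omt_def Omx_def Y_lin q1_def q1x_def bt_def btx_def CNJ OmR Yab OmYaa lamc
            divide_inverse[of _ "Om11 p"])
        using OmI[of p] i_squared by algebra
    next
      case False
      then have i1: "1 \<le> i" by simp
      show ?thesis
        apply (simp only: mvecV0 mvecU0 mvecVj[OF i1 i] Wt_def Omt_def Omx_def Y_lin q1_def q1x_def bt_def btx_def CNJ OmR Yab OmYaa lamc
            divide_inverse[of _ "Om11 p"])
        using OmI[of p] i_squared by algebra
    qed
  qed
  have LE: "lax_eqs N (\<lambda>p. Qmat N k (q1 p)) (\<lambda>p. Qmat N k (q1x p)) lam
      (\<lambda>p i. Phi p i - Phi1 p i * Om1 p / Om11 p)"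
    unfolding lax_eqs_def using PNx PNt by simp
  show ?thesis
    unfolding Let_def Om1_def[symmetric]
    apply (rule exI[of _ q1], rule exI[of _ q1x])
    using QN q1Px LE by blast
qed

end
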